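(* Let $k\ge3$ and let $\{S_n\}$ be a perturbed sequence of weak shifts of degree $d$ corresponding to a uniformly bounded sequence of weak shift-like maps of degree $\tilde d\le d-2$. Let $G_n(z)=d^{-n}\log^+\|S(n)(z)\|_{\sup}$ and let $G$ be the function equal to $\lim_n G_n$ on $U^+$ and to $0$ on $\mathbb{C}^k\setminus U^+$. Then $\{G_n\}$ converges to $G$ uniformly on compact subsets of $\mathbb{C}^k$.
   Context: Let $Q_m(z)=z^m$ and $\mathbf H_d(w_1,\dots,w_{k-1})=\sum_{i=1}^{k-1}w_i^d$. A uniformly bounded sequence of weak shift-like maps of degree $\tilde d\ge1$ is a sequence $\mathsf S_n(z)=(z_2,\dots,z_k,a_nz_1+p_n(z_2,\dots,z_k))$ with $\deg(a_nz_1+p_n)=\tilde d$, $p_n=\sum_i\alpha_{i,n}\mathbf z^i$, and constants $\tilde m,\tilde M>0$ with $\tilde m<|a_n|<\tilde M$, $|\alpha_{i,n}|<\tilde M$. The associated perturbed sequence of weak shifts of degree $d\ge\tilde d+2$ is $S_n(z)=\mathsf S_n(z)+(0,\dots,0,Q_{d-1}(z_2),\mathbf H_d(z_2,\dots,z_k))$. $S(n)=S_n\circ\cdots\circ S_1$; $\|\cdot\|_{\sup}$ is the sup-norm; $\log^+=\max\{\log,0\}$. $U^+=\{z\in\mathbb{C}^k:\overline{S(n)}([z:1])\to[0:\cdots:0:1:0]\}$ (extension to $\mathbb{P}^k$; limit point has only the $k$-th homogeneous coordinate nonzero); the limit $\lim_nG_n$ exists on $U^+$. *)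

theory Defs
  imports "HOL-Analysis.Analysis"
begin

text \<open>Points of C^k are represented as functions nat => complex, with the paper's
coordinate z_(j+1) stored at index j (j < k) and all indices >= k equal to 0.\<close>

definition Ck :: "nat \<Rightarrow> (nat \<Rightarrow> complex) set" where
  "Ck k = {z. \<forall>j\<ge>k. z j = 0}"

text \<open>Multi-indices: exponent functions nat => nat; the monomial z^i in the
variables z_2,...,z_k (indices 1..k-1).\<close>

definition multi_deg :: "(nat \<Rightarrow> nat) \<Rightarrow> nat \<Rightarrow> nat" where
  "multi_deg i k = (\<Sum>j\<in>{1..<k}. i j)"

definition monom :: "nat \<Rightarrow> (nat \<Rightarrow> nat) \<Rightarrow> (nat \<Rightarrow> complex) \<Rightarrow> complex" where
  "monom k i z = (\<Prod>j\<in>{1..<k}. z j ^ i j)"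

definition poly_p :: "nat \<Rightarrow> ((nat \<Rightarrow> nat) \<Rightarrow> complex) \<Rightarrow> (nat \<Rightarrow> complex) \<Rightarrow> complex" where
  "poly_p k \<alpha> z = (\<Sum>i\<in>{i. \<alpha> i \<noteq> 0}. \<alpha> i * monom k i z)"

text \<open>Perturbed weak shift:
  S(z) = (z_2,...,z_k, a z_1 + p(z_2..z_k)) + (0,...,0, z_2^(d-1), sum_(i=2..k) z_i^d).\<close>

definition weak_shift ::
  "nat \<Rightarrow> nat \<Rightarrow> complex \<Rightarrow> ((nat \<Rightarrow> nat) \<Rightarrow> complex) \<Rightarrow> (nat \<Rightarrow> complex) \<Rightarrow> (nat \<Rightarrow> complex)" where
  "weak_shift k d a \<alpha> z = (\<lambda>j.
     if j < k - 2 then z (j + 1)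
     else if j = k - 2 then z (k - 1) + z 1 ^ (d - 1)
     else if j = k - 1 then a * z 0 + poly_p k \<alpha> z + (\<Sum>l\<in>{1..<k}. z l ^ d)
     else 0)"

text \<open>S(n) = S_n o ... o S_1, where the n-th map S_n uses the data a (n-1), alpha (n-1).\<close>

fun Scomp :: "nat \<Rightarrow> nat \<Rightarrow> (nat \<Rightarrow> complex) \<Rightarrow> (nat \<Rightarrow> (nat \<Rightarrow> nat) \<Rightarrow> complex)
               \<Rightarrow> nat \<Rightarrow> (nat \<Rightarrow> complex) \<Rightarrow> (nat \<Rightarrow> complex)" where
  "Scomp k d a \<alpha> 0 = id"
| "Scomp k d a \<alpha> (Suc n) = weak_shift k d (a n) (\<alpha> n) \<circ> Scomp k d a \<alpha> n"

definition supnorm :: "nat \<Rightarrow> (nat \<Rightarrow> complex) \<Rightarrow> real" where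
  "supnorm k z = Max ((\<lambda>j. cmod (z j)) ` {..<k})"

definition logplus :: "real \<Rightarrow> real" where
  "logplus x = (if x \<le> 1 then 0 else ln x)"

definition Gn :: "nat \<Rightarrow> nat \<Rightarrow> (nat \<Rightarrow> complex) \<Rightarrow> (nat \<Rightarrow> (nat \<Rightarrow> nat) \<Rightarrow> complex)
               \<Rightarrow> nat \<Rightarrow> (nat \<Rightarrow> complex) \<Rightarrow> real" where
  "Gn k d a \<alpha> n z = logplus (supnorm k (Scomp k d a \<alpha> n z)) / real d ^ n"

text \<open>Convergence of [w_n : 1] in P^k to [0:...:0:1:0] (only the k-th homogeneous
coordinate nonzero), expressed in the standard affine chart {w_k \<noteq> 0} of P^k
around that point, whose coordinates are w_j / w_k (j \<noteq> k) and 1 / w_k.\<close>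

definition proj_tendsto_ek :: "nat \<Rightarrow> (nat \<Rightarrow> nat \<Rightarrow> complex) \<Rightarrow> bool" where
  "proj_tendsto_ek k w \<longleftrightarrow>
     (\<forall>\<^sub>F n in sequentially. w n (k - 1) \<noteq> 0) \<and>
     (\<forall>j<k. j \<noteq> k - 1 \<longrightarrow> ((\<lambda>n. w n j / w n (k - 1)) \<longlongrightarrow> 0) sequentially) \<and>
     ((\<lambda>n. 1 / w n (k - 1)) \<longlongrightarrow> 0) sequentially"

definition Uplus :: "nat \<Rightarrow> nat \<Rightarrow> (nat \<Rightarrow> complex) \<Rightarrow> (nat \<Rightarrow> (nat \<Rightarrow> nat) \<Rightarrow> complex)
                    \<Rightarrow> (nat \<Rightarrow> complex) set" where
  "Uplus k d a \<alpha> = {z \<in> Ck k. proj_tendsto_ek k (\<lambda>n. Scomp k d a \<alpha> n z)}"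

definition Gfun :: "nat \<Rightarrow> nat \<Rightarrow> (nat \<Rightarrow> complex) \<Rightarrow> (nat \<Rightarrow> (nat \<Rightarrow> nat) \<Rightarrow> complex)
                    \<Rightarrow> (nat \<Rightarrow> complex) \<Rightarrow> real" where
  "Gfun k d a \<alpha> z = (if z \<in> Uplus k d a \<alpha> then lim (\<lambda>n. Gn k d a \<alpha> n z) else 0)"

end

theory Submission
  imports Defs
begin

locale wsl =
  fixes k d dt :: nat
    and a :: "nat \<Rightarrow> complex"
    and \<alpha> :: "nat \<Rightarrow> (nat \<Rightarrow> nat) \<Rightarrow> complex"
    and mt Mt :: real
  assumes k3: "k \<ge> 3"
    and dt1: "dt \<ge> 1"
    and ddt: "dt + 2 \<le> d"
    and mt_pos: "mt > 0" and Mt_pos: "Mt > 0"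
    and a_bd: "\<And>n. mt < cmod (a n) \<and> cmod (a n) < Mt"
    and alpha_bd: "\<And>n i. cmod (\<alpha> n i) < Mt"
    and alpha_vars: "\<And>n i. \<alpha> n i \<noteq> 0 \<Longrightarrow> (\<forall>j. j \<notin> {1..<k} \<longrightarrow> i j = 0)"
    and alpha_deg: "\<And>n i. \<alpha> n i \<noteq> 0 \<Longrightarrow> multi_deg i k \<le> dt"
begin

definition N :: "(nat \<Rightarrow> complex) \<Rightarrow> real" where "N w = supnorm k w"
definition D :: "(nat \<Rightarrow> complex) \<Rightarrow> real" where "D w = max 1 (N w)"

lemma N_ge: "j < k \<Longrightarrow> cmod (w j) \<le> N w"
  unfolding N_def supnorm_def by (rule Max_ge) auto

lemma N_le: "(\<And>j. j < k \<Longrightarrow> cmod (w j) \<le> b) \<Longrightarrow> N w \<le> b"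
proof -
  have "0 \<in> {..<k}" using k3 by simp
  hence "{..<k} \<noteq> {}" by blast
  thus "(\<And>j. j < k \<Longrightarrow> cmod (w j) \<le> b) \<Longrightarrow> N w \<le> b"
    unfolding N_def supnorm_def by (subst Max_le_iff) auto
qed

lemma N_nonneg: "0 \<le> N w"
  using N_ge[of 0 w] k3 norm_ge_zero[of "w 0"] by linarith

lemma D_ge1: "1 \<le> D w" unfolding D_def by simp

lemma coord_le_D: "j < k \<Longrightarrow> cmod (w j) \<le> D w"
  unfolding D_def using N_ge by (meson max.coboundedI2)

definition Iset :: "(nat \<Rightarrow> nat) set" where
  "Iset = {i. \<forall>x. (x \<in> {1..<k} \<longrightarrow> i x \<in> {0..dt}) \<and> (x \<notin> {1..<k} \<longrightarrow> i x = 0)}"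

lemma Iset_fin: "finite Iset"
  unfolding Iset_def by (rule finite_set_of_finite_funs) auto

lemma supp_sub: "{i. \<alpha> n i \<noteq> 0} \<subseteq> Iset"
proof
  fix i assume "i \<in> {i. \<alpha> n i \<noteq> 0}"
  hence nz: "\<alpha> n i \<noteq> 0" by simp
  have "i x \<le> dt" if "x \<in> {1..<k}" for x
  proof -
    have "i x \<le> multi_deg i k" unfolding multi_deg_def
      using that by (intro member_le_sum) auto
    thus ?thesis using alpha_deg[OF nz] by simp
  qed
  thus "i \<in> Iset" unfolding Iset_def using alpha_vars[OF nz] by auto
qed

definition P :: real where "P = Mt * real (card Iset)"

lemma P_nonneg: "0 \<le> P" unfolding P_def using Mt_pos by simp

lemma monom_bd:
  assumes "\<alpha> n i \<noteq> 0"
  shows "cmod (monom k i w) \<le> D w ^ (d - 2)"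
proof -
  have "cmod (monom k i w) = (\<Prod>j\<in>{1..<k}. cmod (w j) ^ i j)"
    unfolding monom_def by (simp add: prod_norm[symmetric] norm_power)
  also have "\<dots> \<le> (\<Prod>j\<in>{1..<k}. D w ^ i j)"
    by (intro prod_mono conjI power_mono coord_le_D) auto
  also have "\<dots> = D w ^ multi_deg i k"
    unfolding multi_deg_def by (simp add: power_sum)
  also have "\<dots> \<le> D w ^ (d - 2)"
    using alpha_deg[OF assms] ddt D_ge1 by (intro power_increasing) auto
  finally show ?thesis .
qed

lemma poly_bd: "cmod (poly_p k (\<alpha> n) w) \<le> P * D w ^ (d - 2)"
proof -
  have D0: "0 \<le> D w" using D_ge1[of w] by linarith
  hence MD0: "0 \<le> Mt * D w ^ (d - 2)" using Mt_pos by simp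
  have fin: "finite {i. \<alpha> n i \<noteq> 0}" using finite_subset[OF supp_sub Iset_fin] .
  have "cmod (poly_p k (\<alpha> n) w) \<le> (\<Sum>i\<in>{i. \<alpha> n i \<noteq> 0}. cmod (\<alpha> n i * monom k i w))"
    unfolding poly_p_def by (rule norm_sum)
  also have "\<dots> \<le> (\<Sum>i\<in>{i. \<alpha> n i \<noteq> 0}. Mt * D w ^ (d - 2))"
  proof (rule sum_mono)
    fix i assume "i \<in> {i. \<alpha> n i \<noteq> 0}"
    hence "cmod (monom k i w) \<le> D w ^ (d - 2)" using monom_bd by simp
    moreover have "cmod (\<alpha> n i) \<le> Mt" using alpha_bd[of n i] by simp
    ultimately show "cmod (\<alpha> n i * monom k i w) \<le> Mt * D w ^ (d - 2)"
      unfolding norm_mult using Mt_pos by (intro mult_mono) auto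
  qed
  also have "\<dots> = real (card {i. \<alpha> n i \<noteq> 0}) * (Mt * D w ^ (d - 2))" by simp
  also have "\<dots> \<le> real (card Iset) * (Mt * D w ^ (d - 2))"
    using card_mono[OF Iset_fin supp_sub[of n]] MD0
    by (intro mult_right_mono) auto
  finally show ?thesis unfolding P_def by (simp add: algebra_simps)
qed


abbreviation W :: "nat \<Rightarrow> (nat \<Rightarrow> complex) \<Rightarrow> (nat \<Rightarrow> complex)" where
  "W n \<equiv> weak_shift k d (a n) (\<alpha> n)"

lemma ws_low: "j < k - 2 \<Longrightarrow> W n w j = w (j+1)"
  unfolding weak_shift_def by simp

lemma ws_km2: "W n w (k-2) = w (k-1) + w 1 ^ (d-1)"
  unfolding weak_shift_def by simp

lemma ws_km1: "W n w (k-1) = a n * w 0 + poly_p k (\<alpha> n) w + (\<Sum>l\<in>{1..<k}. w l ^ d)"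
proof -
  have "k - 1 \<noteq> k - 2" "\<not> (k-1 < k-2)" using k3 by auto
  thus ?thesis unfolding weak_shift_def by simp
qed

lemma d3: "d \<ge> 3" using dt1 ddt by simp

lemma D_pow_mono: "i \<le> j \<Longrightarrow> D w ^ i \<le> D w ^ j"
  using D_ge1 by (intro power_increasing) auto

lemma low_bd: "j < k - 1 \<Longrightarrow> cmod (W n w j) \<le> 2 * D w ^ (d-1)"
proof -
  assume j: "j < k - 1"
  have DD: "D w \<le> D w ^ (d-1)" using D_pow_mono[of 1 "d-1" w] d3 by simp
  have D0: "0 \<le> D w ^ (d-1)" using D_ge1 by (meson order.trans zero_le_one zero_le_power)
  show ?thesis
  proof (cases "j < k - 2")
    case True
    hence "cmod (W n w j) = cmod (w (j+1))" using ws_low by simp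
    also have "\<dots> \<le> D w" using True by (intro coord_le_D) auto
    finally show ?thesis using DD D0 by linarith
  next
    case False
    hence jj: "j = k - 2" using j by simp
    have "cmod (W n w j) \<le> cmod (w (k-1)) + cmod (w 1) ^ (d-1)"
      unfolding jj ws_km2 by (metis norm_power norm_triangle_ineq)
    also have "\<dots> \<le> D w + D w ^ (d-1)"
      using k3 by (intro add_mono power_mono coord_le_D) auto
    finally show ?thesis using DD by linarith
  qed
qed

lemma top_bd: "cmod (W n w (k-1)) \<le> (Mt + P + real k) * D w ^ d"
proof -
  have Dd: "D w \<le> D w ^ d" using D_pow_mono[of 1 d w] d3 by simp
  have Dd2: "D w ^ (d-2) \<le> D w ^ d" using D_pow_mono[of "d-2" d w] by simp
  have "cmod (a n * w 0) \<le> Mt * D w"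
    unfolding norm_mult using a_bd[of n] k3 coord_le_D[of 0 w] Mt_pos
    by (intro mult_mono) auto
  also have "\<dots> \<le> Mt * D w ^ d" using Dd Mt_pos by simp
  finally have t1: "cmod (a n * w 0) \<le> Mt * D w ^ d" .
  have t2: "cmod (poly_p k (\<alpha> n) w) \<le> P * D w ^ d"
    using poly_bd[of n w] Dd2 P_nonneg by (meson mult_left_mono order.trans)
  have "cmod (\<Sum>l\<in>{1..<k}. w l ^ d) \<le> (\<Sum>l\<in>{1..<k}. cmod (w l) ^ d)"
    by (metis (no_types, lifting) norm_power norm_sum sum.cong)
  also have "\<dots> \<le> (\<Sum>l\<in>{1..<k}. D w ^ d)"
    by (intro sum_mono power_mono coord_le_D) auto
  also have "\<dots> \<le> real k * D w ^ d" using D_ge1[of w]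
    by simp
  finally have t3: "cmod (\<Sum>l\<in>{1..<k}. w l ^ d) \<le> real k * D w ^ d" .
  have "cmod (W n w (k-1)) \<le> cmod (a n * w 0) + cmod (poly_p k (\<alpha> n) w) + cmod (\<Sum>l\<in>{1..<k}. w l ^ d)"
    unfolding ws_km1 by (meson add_mono norm_triangle_ineq order.trans order_refl)
  also have "\<dots> \<le> Mt * D w ^ d + P * D w ^ d + real k * D w ^ d"
    using t1 t2 t3 by linarith
  finally show ?thesis by (simp add: algebra_simps)
qed

definition C :: real where "C = Mt + P + real k + 2"

lemma C_ge1: "1 \<le> C" unfolding C_def using Mt_pos P_nonneg by simp

lemma D_step: "D (W n w) \<le> C * D w ^ d"
proof -
  have Dd: "D w ^ (d-1) \<le> D w ^ d" using D_pow_mono[of "d-1" d w] by simp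
  have D1: "1 \<le> D w ^ d" using D_ge1 by simp
  have "N (W n w) \<le> C * D w ^ d"
  proof (rule N_le)
    fix j assume j: "j < k"
    show "cmod (W n w j) \<le> C * D w ^ d"
    proof (cases "j < k - 1")
      case True
      have "2 * D w ^ d \<le> C * D w ^ d" using D1 Mt_pos P_nonneg unfolding C_def
        by (intro mult_right_mono) auto
      thus ?thesis using low_bd[OF True, of n w] Dd by linarith
    next
      case False
      hence "j = k - 1" using j by simp
      thus ?thesis using top_bd[of n w] D1 unfolding C_def
        by (smt (verit, ccfv_SIG) mult_right_mono)
    qed
  qed
  moreover have "1 * 1 \<le> C * D w ^ d" using C_ge1 D1 by (intro mult_mono) auto
  ultimately show ?thesis unfolding D_def[of "W n w"] by simp
qed


definition R :: real where "R = 8 * real k + 4 * (Mt + P) + 8"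

definition Vp :: "(nat \<Rightarrow> complex) set" where
  "Vp = {w. R \<le> cmod (w (k-1)) \<and> (\<forall>j<k-1. real k * cmod (w j) \<le> cmod (w (k-1)))}"

lemma R_ge: "8 * real k \<le> R" "4 * (Mt + P) \<le> R" "8 \<le> R"
  unfolding R_def using Mt_pos P_nonneg by auto

lemma Vp_small: "w \<in> Vp \<Longrightarrow> j < k - 1 \<Longrightarrow> cmod (w j) \<le> cmod (w (k-1))"
proof -
  assume "w \<in> Vp" "j < k - 1"
  hence "real k * cmod (w j) \<le> cmod (w (k-1))" unfolding Vp_def by auto
  moreover have "1 \<le> real k" using k3 by simp
  hence "cmod (w j) \<le> real k * cmod (w j)"
    using mult_right_mono[of 1 "real k" "cmod (w j)"] by simp
  ultimately show ?thesis by linarith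
qed

lemma Vp_D: "w \<in> Vp \<Longrightarrow> D w = cmod (w (k-1))"
proof -
  assume w: "w \<in> Vp"
  have "N w \<le> cmod (w (k-1))"
  proof (rule N_le)
    fix j assume "j < k"
    show "cmod (w j) \<le> cmod (w (k-1))"
    proof (cases "j < k - 1")
      case True thus ?thesis using Vp_small[OF w, of j] by simp
    next
      case False hence "j = k - 1" using \<open>j < k\<close> by simp
      thus ?thesis by simp
    qed
  qed
  moreover have "cmod (w (k-1)) \<le> N w" using k3 by (intro N_ge) auto
  moreover have "1 \<le> cmod (w (k-1))" using w R_ge unfolding Vp_def by auto
  ultimately show ?thesis unfolding D_def by simp
qed

lemma k_pow: "2 * real (k - 2) \<le> real k ^ d"
proof -
  have "k ^ 2 \<le> k ^ d" using d3 k3 by (intro power_increasing) auto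
  moreover have "3 * k \<le> k * k" using k3 by (intro mult_right_mono) auto
  moreover have "k ^ 2 = k * k" by (simp add: power2_eq_square)
  ultimately have "2 * (k - 2) \<le> k ^ d" by linarith
  hence "real (2 * (k - 2)) \<le> real (k ^ d)" by (rule of_nat_mono)
  thus ?thesis by simp
qed

lemma x_pow: "0 \<le> x \<Longrightarrow> x ^ d = x * x ^ (d - 1)" for x :: real
  using d3 by (cases d) simp_all

lemma Vp_lower:
  assumes w: "w \<in> Vp"
  shows "cmod (w (k-1)) ^ d / 4 \<le> cmod (W n w (k-1))"
proof -
  define x where "x = cmod (w (k-1))"
  have xR: "R \<le> x" using w unfolding Vp_def x_def by auto
  hence x1: "1 \<le> x" using R_ge by linarith
  have sm: "real k * cmod (w j) \<le> x" if "j < k - 1" for j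
    using w that unfolding Vp_def x_def by auto
  define s where "s = (\<Sum>l\<in>{1..<k-1}. w l ^ d)"
  have ksuc: "k = Suc (k-1)" using k3 by simp
  have split: "(\<Sum>l\<in>{1..<k}. w l ^ d) = w (k-1) ^ d + s"
    unfolding s_def using k3 by (subst ksuc, subst sum.atLeastLessThan_Suc) auto
  have kpos: "0 < real k" using k3 by simp
  have "cmod s \<le> (\<Sum>l\<in>{1..<k-1}. cmod (w l) ^ d)"
    unfolding s_def by (metis (no_types, lifting) norm_power norm_sum sum.cong)
  also have "\<dots> \<le> (\<Sum>l\<in>{1..<k-1}. (x / real k) ^ d)"
  proof (intro sum_mono power_mono)
    fix l assume "l \<in> {1..<k-1}"
    hence "real k * cmod (w l) \<le> x" using sm by auto
    thus "cmod (w l) \<le> x / real k" using kpos by (simp add: field_simps)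
  qed auto
  also have "\<dots> = real (k - 2) * (x ^ d / real k ^ d)"
  proof -
    have eq: "k - Suc (Suc 0) = k - 2" by (simp add: numeral_2_eq_2)
    show ?thesis by (simp add: power_divide eq)
  qed
  also have "\<dots> \<le> x ^ d / 2"
  proof -
    have "real (k - 2) * (x ^ d / real k ^ d) = (2 * real (k-2)) * x ^ d / (2 * real k ^ d)"
      by simp
    also have "\<dots> \<le> real k ^ d * x ^ d / (2 * real k ^ d)"
      using k_pow x1 kpos by (intro divide_right_mono mult_right_mono) auto
    also have "\<dots> = x ^ d / 2" using kpos by simp
    finally show ?thesis .
  qed
  finally have sbd: "cmod s \<le> x ^ d / 2" .
  have w0: "cmod (w 0) \<le> x" using Vp_small[OF w, of 0] k3 unfolding x_def by auto
  have t1: "cmod (a n * w 0) \<le> Mt * x"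
    unfolding norm_mult using a_bd[of n] w0 Mt_pos by (intro mult_mono) auto
  have t2: "cmod (poly_p k (\<alpha> n) w) \<le> P * x ^ (d - 2)"
    using poly_bd[of n w] Vp_D[OF w] unfolding x_def by simp
  have xd1: "x \<le> x ^ (d-1)" using x1 d3 power_increasing[of 1 "d-1" x] by simp
  have xd2: "x ^ (d-2) \<le> x ^ (d-1)" using x1 d3 by (intro power_increasing) auto
  have "Mt * x + P * x ^ (d-2) \<le> (Mt + P) * x ^ (d-1)"
    using xd1 xd2 Mt_pos P_nonneg by (simp add: distrib_right add_mono mult_left_mono)
  also have "\<dots> \<le> (x / 4) * x ^ (d-1)"
    using xR R_ge x1 by (intro mult_right_mono) auto
  also have "\<dots> = x ^ d / 4" using x_pow[of x] x1 by simp
  finally have lo: "Mt * x + P * x ^ (d-2) \<le> x ^ d / 4" .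
  have "cmod (w (k-1) ^ d) - cmod s \<le> cmod (w (k-1) ^ d + s)"
    by (rule norm_diff_ineq)
  hence A: "x ^ d - x ^ d / 2 \<le> cmod (w (k-1) ^ d + s)"
    using sbd unfolding x_def by (simp add: norm_power)
  have "W n w (k-1) = (w (k-1) ^ d + s) + (a n * w 0 + poly_p k (\<alpha> n) w)"
    unfolding ws_km1 split by simp
  hence "cmod (w (k-1) ^ d + s) - cmod (a n * w 0 + poly_p k (\<alpha> n) w) \<le> cmod (W n w (k-1))"
    by (simp add: norm_diff_ineq)
  moreover have "cmod (a n * w 0 + poly_p k (\<alpha> n) w) \<le> Mt * x + P * x ^ (d-2)"
    using t1 t2 norm_triangle_ineq[of "a n * w 0" "poly_p k (\<alpha> n) w"] by linarith
  ultimately show ?thesis using A lo unfolding x_def[symmetric] by linarith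
qed


lemma Vp_step:
  assumes w: "w \<in> Vp"
  shows "W n w \<in> Vp"
proof -
  define x where "x = cmod (w (k-1))"
  have xR: "R \<le> x" using w unfolding Vp_def x_def by auto
  hence x1: "1 \<le> x" and x8: "8 \<le> x" and x8k: "8 * real k \<le> x" using R_ge by linarith+
  have xd1: "x \<le> x ^ (d-1)" using x1 d3 power_increasing[of 1 "d-1" x] by simp
  have lo: "x ^ d / 4 \<le> cmod (W n w (k-1))" using Vp_lower[OF w] unfolding x_def .
  have xd: "x ^ d = x * x ^ (d-1)" using x_pow x1 by simp
  have "8 * x \<le> x * x ^ (d-1)" using x8 xd1 x1 by (metis mult.commute mult_mono' order.trans zero_le_numeral linorder_linear le_numeral_extra(1) dual_order.trans)
  hence "2 * x \<le> x ^ d / 4" using xd by simp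
  hence top: "R \<le> cmod (W n w (k-1))" using lo xR x1 by linarith
  have "real k * cmod (W n w j) \<le> cmod (W n w (k-1))" if j: "j < k - 1" for j
  proof -
    have "cmod (W n w j) \<le> 2 * x ^ (d-1)" using low_bd[OF j, of n w] Vp_D[OF w] unfolding x_def by simp
    hence "real k * cmod (W n w j) \<le> real k * (2 * x ^ (d-1))" by (intro mult_left_mono) auto
    also have "\<dots> = (8 * real k) * x ^ (d-1) / 4" by simp
    also have "\<dots> \<le> x * x ^ (d-1) / 4" using x8k x1
      by (intro divide_right_mono mult_right_mono) auto
    also have "\<dots> = x ^ d / 4" using xd by simp
    finally show ?thesis using lo by linarith
  qed
  thus ?thesis using top unfolding Vp_def by auto
qed

lemma D_ge_coord: "j < k \<Longrightarrow> cmod (w j) \<le> D w" by (rule coord_le_D)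

lemma Vp_L:
  assumes w: "w \<in> Vp"
  shows "real d * ln (D w) - ln 4 \<le> ln (D (W n w))"
proof -
  define x where "x = cmod (w (k-1))"
  have x1: "1 \<le> x" using w R_ge unfolding Vp_def x_def by auto
  have "cmod (W n w (k-1)) \<le> D (W n w)" using k3 by (intro coord_le_D) auto
  hence "x ^ d / 4 \<le> D (W n w)" using Vp_lower[OF w, of n] unfolding x_def by linarith
  moreover have "0 < x ^ d / 4" using x1 by simp
  ultimately have "ln (x ^ d / 4) \<le> ln (D (W n w))" by simp
  moreover have "ln (x ^ d / 4) = real d * ln x - ln 4" using x1 by (simp add: ln_div ln_realpow)
  ultimately show ?thesis using Vp_D[OF w] unfolding x_def by simp
qed

definition K2 :: real where "K2 = 2 * real k * R"

lemma K2_ge: "2 * R \<le> K2" "2 * real k \<le> K2" "R \<le> K2" "1 \<le> K2"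
proof -
  have k1: "1 \<le> real k" using k3 by simp
  have R1: "1 \<le> R" using R_ge by linarith
  show "2 * R \<le> K2" unfolding K2_def using k1 R1 by (simp add: mult_right_mono)
  show "2 * real k \<le> K2" unfolding K2_def using k1 R1 by (simp add: mult_left_mono)
  thus "R \<le> K2" "1 \<le> K2" using \<open>2 * R \<le> K2\<close> R1 by linarith+
qed

lemma notVp:
  assumes nv: "W n w \<notin> Vp"
  shows "D (W n w) \<le> K2 * D w ^ (d-1)"
proof -
  define E where "E = D w ^ (d-1)"
  have E1: "1 \<le> E" unfolding E_def using D_ge1 by simp
  have K2E: "K2 \<le> K2 * E" using E1 K2_ge by (simp add: mult_le_cancel_left1)
  have low: "cmod (W n w j) \<le> 2 * real k * E" if "j < k - 1" for j
  proof -
    have "cmod (W n w j) \<le> 2 * E" using low_bd[OF that] unfolding E_def by simp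
    moreover have "2 * E \<le> 2 * real k * E" using k3 E1 by simp
    ultimately show ?thesis by linarith
  qed
  have "N (W n w) \<le> K2 * E"
  proof (rule N_le)
    fix j assume j: "j < k"
    show "cmod (W n w j) \<le> K2 * E"
    proof (cases "j < k - 1")
      case True
      have "2 * real k * E \<le> K2 * E" using K2_ge E1 by (intro mult_right_mono) auto
      thus ?thesis using low[OF True] by linarith
    next
      case False
      hence jj: "j = k - 1" using j by simp
      show ?thesis
      proof (cases "R \<le> cmod (W n w (k-1))")
        case False
        thus ?thesis using K2E K2_ge unfolding jj by linarith
      next
        case True
        then obtain i where i: "i < k - 1" "cmod (W n w (k-1)) < real k * cmod (W n w i)"
          using nv unfolding Vp_def by (auto simp: not_le)
        have "real k * cmod (W n w i) \<le> real k * (2 * real k * E)"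
          using low[OF i(1)] by (intro mult_left_mono) auto
        moreover have "real k * (2 * real k * E) \<le> K2 * E"
        proof -
          have "real k * (2 * real k * E) = (2 * real k) * (real k * E)" by simp
          moreover have "real k \<le> R" using R_ge by linarith
          ultimately show ?thesis unfolding K2_def using E1 by (simp add: mult_left_mono)
        qed
        ultimately show ?thesis using i unfolding jj by linarith
      qed
    qed
  qed
  moreover have "1 \<le> K2 * E" using K2E K2_ge by linarith
  ultimately show ?thesis unfolding D_def[of "W n w"] E_def by simp
qed


abbreviation S :: "nat \<Rightarrow> (nat \<Rightarrow> complex) \<Rightarrow> (nat \<Rightarrow> complex)" where
  "S n z \<equiv> Scomp k d a \<alpha> n z"

definition L :: "nat \<Rightarrow> (nat \<Rightarrow> complex) \<Rightarrow> real" where "L n z = ln (D (S n z))"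
definition q :: real where "q = 1 / real d"
definition \<rho> :: real where "\<rho> = (real d - 1) / real d"
definition C1 :: real where "C1 = max (ln C) (ln 4)"
definition G :: "nat \<Rightarrow> (nat \<Rightarrow> complex) \<Rightarrow> real" where "G n z = L n z * q ^ n"

lemma S_Suc: "S (Suc n) z = W n (S n z)" by simp

lemma D_pos: "0 < D w" using D_ge1[of w] by linarith

lemma L_nonneg: "0 \<le> L n z" unfolding L_def using D_ge1 by simp

lemma LA: "L (Suc n) z \<le> real d * L n z + ln C"
proof -
  have "D (S (Suc n) z) \<le> C * D (S n z) ^ d" using D_step by simp
  hence "ln (D (S (Suc n) z)) \<le> ln (C * D (S n z) ^ d)" using D_pos C_ge1 by simp
  also have "\<dots> = ln C + real d * ln (D (S n z))"
  proof -
    have "0 < D (S n z) ^ d" using D_pos by simp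
    hence "ln (C * D (S n z) ^ d) = ln C + ln (D (S n z) ^ d)" using C_ge1 D_pos[of "S n z"] by (simp add: ln_mult)
    thus ?thesis using D_pos by (simp add: ln_realpow)
  qed
  finally show ?thesis unfolding L_def by simp
qed

lemma LB: "S n z \<in> Vp \<Longrightarrow> real d * L n z - ln 4 \<le> L (Suc n) z"
  unfolding L_def using Vp_L by simp

lemma LB': "S n z \<in> Vp \<Longrightarrow> S (Suc n) z \<in> Vp"
  using Vp_step by simp

lemma LC: "S (Suc n) z \<notin> Vp \<Longrightarrow> L (Suc n) z \<le> (real d - 1) * L n z + ln K2"
proof -
  assume "S (Suc n) z \<notin> Vp"
  hence "D (S (Suc n) z) \<le> K2 * D (S n z) ^ (d-1)" using notVp by simp
  hence "ln (D (S (Suc n) z)) \<le> ln (K2 * D (S n z) ^ (d-1))" using D_pos K2_ge by simp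
  also have "\<dots> = ln K2 + real (d-1) * ln (D (S n z))"
  proof -
    have "0 < D (S n z) ^ (d-1)" using D_pos by simp
    hence "ln (K2 * D (S n z) ^ (d-1)) = ln K2 + ln (D (S n z) ^ (d-1))" using K2_ge D_pos[of "S n z"] by (simp add: ln_mult)
    thus ?thesis using D_pos by (simp add: ln_realpow)
  qed
  also have "real (d-1) = real d - 1" using d3 by simp
  finally show ?thesis unfolding L_def by simp
qed

lemma Vinv: "S n z \<in> Vp \<Longrightarrow> n \<le> m \<Longrightarrow> S m z \<in> Vp"
proof -
  assume "S n z \<in> Vp" "n \<le> m"
  from \<open>n \<le> m\<close> show ?thesis
  proof (induction m rule: dec_induct)
    case base thus ?case using \<open>S n z \<in> Vp\<close> by simp
  next
    case (step m) thus ?case using LB' by blast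
  qed
qed

lemma logplus_N: "logplus (N w) = ln (D w)"
  unfolding logplus_def D_def by auto

lemma Gn_eq: "Gn k d a \<alpha> n z = G n z"
proof -
  have "(1 / real d) ^ n = 1 / real d ^ n" by (rule power_one_over)
  thus ?thesis unfolding Gn_def G_def L_def q_def using logplus_N[of "S n z"] N_def
    by simp
qed

lemma q_props: "0 < q" "2 * q \<le> 1" "real d * q = 1"
  unfolding q_def using d3 by auto

lemma C1_ge: "ln C \<le> C1" "ln 4 \<le> C1" "0 \<le> C1"
  unfolding C1_def using C_ge1 by (auto simp: le_max_iff_disj)

lemma tele_aux: "S n z \<in> Vp \<Longrightarrow> n \<le> m \<Longrightarrow> \<bar>G m z - G n z\<bar> \<le> C1 * (q ^ n - q ^ m)"
proof -
  assume V: "S n z \<in> Vp" and nm: "n \<le> m"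
  from nm show ?thesis
  proof (induction m rule: dec_induct)
    case base thus ?case by simp
  next
    case (step m)
    have Vm: "S m z \<in> Vp" using Vinv[OF V step(1)] .
    have diff: "\<bar>L (Suc m) z - real d * L m z\<bar> \<le> C1" using LA[of m z] LB[OF Vm] C1_ge by linarith
    have "G (Suc m) z - G m z = (L (Suc m) z - real d * L m z) * q ^ Suc m"
    proof -
      have "real d * L m z * q ^ Suc m = L m z * q ^ m * (real d * q)" by (simp add: algebra_simps)
      thus ?thesis unfolding G_def using q_props by (simp add: algebra_simps)
    qed
    hence "\<bar>G (Suc m) z - G m z\<bar> = \<bar>L (Suc m) z - real d * L m z\<bar> * q ^ Suc m"
      using q_props by (simp add: abs_mult)
    also have "\<dots> \<le> C1 * q ^ Suc m" using diff q_props by (intro mult_right_mono) auto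
    also have "\<dots> \<le> C1 * (q ^ m - q ^ Suc m)"
    proof -
      have "(2 * q) * q ^ m \<le> 1 * q ^ m" using q_props by (intro mult_right_mono) auto
      hence "q ^ Suc m * 2 \<le> q ^ m" by (simp add: algebra_simps)
      hence "q ^ Suc m \<le> q ^ m - q ^ Suc m" by simp
      thus ?thesis using C1_ge by (intro mult_left_mono) auto
    qed
    finally show ?case using step(3) by (simp add: algebra_simps)
  qed
qed

lemma tele: "S n z \<in> Vp \<Longrightarrow> n \<le> m \<Longrightarrow> \<bar>G m z - G n z\<bar> \<le> C1 * q ^ n"
proof -
  assume "S n z \<in> Vp" "n \<le> m"
  hence "\<bar>G m z - G n z\<bar> \<le> C1 * (q ^ n - q ^ m)" by (rule tele_aux)
  moreover have "C1 * (q ^ n - q ^ m) \<le> C1 * q ^ n" using C1_ge q_props by (simp add: algebra_simps)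
  ultimately show ?thesis by linarith
qed

lemma noV: "S n z \<notin> Vp \<Longrightarrow> L n z + ln K2 \<le> (real d - 1) ^ n * (L 0 z + ln K2)"
proof (induction n)
  case 0 thus ?case by simp
next
  case (Suc n)
  have "S n z \<notin> Vp" using Suc.prems LB' by blast
  hence IH: "L n z + ln K2 \<le> (real d - 1) ^ n * (L 0 z + ln K2)" using Suc.IH by blast
  have lk: "0 \<le> ln K2" using K2_ge by simp
  have d2: "2 \<le> real d - 1" using d3 by simp
  have "L (Suc n) z + ln K2 \<le> (real d - 1) * L n z + 2 * ln K2" using LC[OF Suc.prems] by linarith
  also have "\<dots> \<le> (real d - 1) * (L n z + ln K2)"
    using d2 lk by (simp add: algebra_simps mult_right_mono)
  also have "\<dots> \<le> (real d - 1) * ((real d - 1) ^ n * (L 0 z + ln K2))"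
    using IH d2 by (intro mult_left_mono) auto
  finally show ?case by simp
qed

lemma rho_props: "0 \<le> \<rho>" "\<rho> < 1" "\<rho> = (real d - 1) * q" "q \<le> \<rho>"
  unfolding \<rho>_def q_def using d3 apply auto
  by (intro divide_right_mono) auto

lemma noV_G: "S n z \<notin> Vp \<Longrightarrow> G n z \<le> \<rho> ^ n * (L 0 z + ln K2)"
proof -
  assume nv: "S n z \<notin> Vp"
  have lk: "0 \<le> ln K2" using K2_ge by simp
  have "L n z \<le> (real d - 1) ^ n * (L 0 z + ln K2)" using noV[OF nv] lk by linarith
  hence "L n z * q ^ n \<le> (real d - 1) ^ n * (L 0 z + ln K2) * q ^ n"
    using q_props by (intro mult_right_mono) auto
  also have "\<dots> = \<rho> ^ n * (L 0 z + ln K2)" using rho_props by (simp add: power_mult_distrib)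
  finally show ?thesis unfolding G_def .
qed

lemma G_nonneg: "0 \<le> G n z" unfolding G_def using L_nonneg q_props by simp


lemma step_exists: "\<not> Q n \<Longrightarrow> Q m \<Longrightarrow> n \<le> m \<Longrightarrow> \<exists>t. n \<le> t \<and> t < m \<and> \<not> Q t \<and> Q (Suc t)"
proof (induction m)
  case 0 thus ?case by simp
next
  case (Suc m)
  show ?case
  proof (cases "Q m")
    case True
    have "n \<le> m" using Suc.prems True by (metis le_SucE)
    then obtain t where "n \<le> t \<and> t < m \<and> \<not> Q t \<and> Q (Suc t)" using Suc.IH Suc.prems True by blast
    thus ?thesis by (intro exI[of _ t]) auto
  next
    case False
    have "n \<le> m" using Suc.prems by (metis le_SucE)
    thus ?thesis using False Suc.prems by (intro exI[of _ m]) auto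
  qed
qed

lemma cauchy_bd:
  assumes B: "L 0 z \<le> B" and nm: "n \<le> m"
  shows "\<bar>G m z - G n z\<bar> \<le> (B + ln K2) * \<rho> ^ n + 2 * C1 * q ^ n"
proof -
  define A where "A = B + ln K2"
  have lk: "0 \<le> ln K2" using K2_ge by simp
  have A0: "0 \<le> A" unfolding A_def using B L_nonneg[of 0 z] lk by linarith
  have qn: "0 \<le> q ^ n" using q_props by simp
  have Ar: "A * \<rho> ^ j \<le> A * \<rho> ^ n" if "n \<le> j" for j
    using that A0 rho_props by (intro mult_left_mono power_decreasing) auto
  have noVA: "G j z \<le> A * \<rho> ^ j" if "S j z \<notin> Vp" for j
  proof -
    have "G j z \<le> \<rho> ^ j * (L 0 z + ln K2)" using noV_G[OF that] .
    also have "\<dots> \<le> \<rho> ^ j * A" unfolding A_def using B rho_props by (intro mult_left_mono) auto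
    finally show ?thesis by (simp add: mult.commute)
  qed
  have C1q: "0 \<le> C1 * q ^ n" using C1_ge qn by simp
  have ApA: "0 \<le> A * \<rho> ^ n" using A0 rho_props by simp
  have main: "\<bar>G m z - G n z\<bar> \<le> A * \<rho> ^ n + 2 * C1 * q ^ n"
  proof (cases "S n z \<in> Vp")
    case True
    thus ?thesis using tele[OF True nm] ApA C1q by linarith
  next
    case False
    have Gn: "G n z \<le> A * \<rho> ^ n" using noVA[OF False] by simp
    have Gm: "G m z \<le> A * \<rho> ^ n + 2 * C1 * q ^ n"
    proof (cases "S m z \<in> Vp")
      case False
      thus ?thesis using noVA[OF False] Ar[OF nm] C1q by linarith
    next
      case True
      obtain t where t: "n \<le> t" "t < m" "S t z \<notin> Vp" "S (Suc t) z \<in> Vp"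
        using step_exists[of "\<lambda>j. S j z \<in> Vp", OF False True nm] by blast
      have qs: "q ^ Suc t \<le> q ^ n" using t q_props by (intro power_decreasing) auto
      have "G (Suc t) z \<le> (real d * L t z + ln C) * q ^ Suc t"
        unfolding G_def using LA[of t z] q_props by (intro mult_right_mono) auto
      also have "\<dots> = G t z + ln C * q ^ Suc t"
      proof -
        have "real d * L t z * q ^ Suc t = L t z * q ^ t * (real d * q)" by (simp add: algebra_simps)
        thus ?thesis unfolding G_def using q_props by (simp add: algebra_simps)
      qed
      finally have g1: "G (Suc t) z \<le> G t z + ln C * q ^ Suc t" .
      have g2: "G m z \<le> G (Suc t) z + C1 * q ^ Suc t" using tele[OF t(4), of m] t by linarith
      have "ln C * q ^ Suc t \<le> C1 * q ^ n"
        using C1_ge qs q_props by (meson mult_mono order.trans zero_le_power less_imp_le)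
      moreover have "C1 * q ^ Suc t \<le> C1 * q ^ n" using C1_ge qs by (intro mult_left_mono) auto
      ultimately show ?thesis using g1 g2 noVA[OF t(3)] Ar[OF t(1)] by linarith
    qed
    show ?thesis using Gn Gm G_nonneg[of n z] G_nonneg[of m z] C1q by linarith
  qed
  thus ?thesis unfolding A_def .
qed

lemma Vp_grow:
  assumes w: "w \<in> Vp"
  shows "2 * cmod (w (k-1)) \<le> cmod (W n w (k-1))"
    and "j < k - 1 \<Longrightarrow> cmod (W n w j) \<le> 8 / cmod (w (k-1)) * cmod (W n w (k-1))"
proof -
  define x where "x = cmod (w (k-1))"
  have xR: "R \<le> x" using w unfolding Vp_def x_def by auto
  hence x1: "1 \<le> x" and x8: "8 \<le> x" using R_ge by linarith+
  have xd1: "x \<le> x ^ (d-1)" using x1 d3 power_increasing[of 1 "d-1" x] by simp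
  have lo: "x ^ d / 4 \<le> cmod (W n w (k-1))" using Vp_lower[OF w] unfolding x_def .
  have xd: "x ^ d = x * x ^ (d-1)" using x_pow x1 by simp
  have "8 * x \<le> x * x ^ (d-1)" using x8 xd1 x1 by (simp add: mult_mono)
  hence "2 * x \<le> x ^ d / 4" using xd by simp
  thus "2 * cmod (w (k-1)) \<le> cmod (W n w (k-1))" using lo unfolding x_def by linarith
  assume j: "j < k - 1"
  have "cmod (W n w j) \<le> 2 * x ^ (d-1)" using low_bd[OF j, of n w] Vp_D[OF w] unfolding x_def by simp
  also have "2 * x ^ (d-1) = 8 / x * (x ^ d / 4)" using xd x1 by simp
  also have "\<dots> \<le> 8 / x * cmod (W n w (k-1))" using lo x1 by (intro mult_left_mono) auto
  finally show "cmod (W n w j) \<le> 8 / cmod (w (k-1)) * cmod (W n w (k-1))" unfolding x_def .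
qed

lemma proj:
  assumes V: "S t z \<in> Vp"
  shows "proj_tendsto_ek k (\<lambda>n. S n z)"
proof -
  define x where "x m = cmod (S m z (k-1))" for m
  have Vm: "S m z \<in> Vp" if "t \<le> m" for m using Vinv[OF V that] .
  have xpos: "1 \<le> x m" if "t \<le> m" for m using Vm[OF that] R_ge unfolding Vp_def x_def by auto
  have grow: "(2::real) ^ m \<le> 2 ^ t * x m" if "t \<le> m" for m
    using that
  proof (induction m rule: dec_induct)
    case base thus ?case using xpos[of t] by simp
  next
    case (step m)
    have "2 * x m \<le> x (Suc m)" unfolding x_def using Vp_grow(1)[OF Vm[OF step(1)], of m] by simp
    hence b: "2 ^ t * (2 * x m) \<le> 2 ^ t * x (Suc m)" by (intro mult_left_mono) auto
    have a: "2 * 2 ^ m \<le> 2 * (2 ^ t * x m)" using step(3) by simp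
    have c: "2 * (2 ^ t * x m) = 2 ^ t * (2 * x m)" by simp
    have "2 * 2 ^ m \<le> 2 ^ t * x (Suc m)" using a b c by linarith
    thus ?case by simp
  qed
  have inv: "1 / x m \<le> 2 ^ t * (1/2) ^ m" if "t \<le> m" for m
  proof -
    have "(2::real) ^ m > 0" by simp
    hence "1 / x m \<le> 2 ^ t / 2 ^ m" using grow[OF that] xpos[OF that]
      by (simp add: field_simps)
    thus ?thesis by (simp add: power_one_over)
  qed
  have lim0: "(\<lambda>m. c * (1/2::real) ^ m) \<longlonglongrightarrow> 0" for c
  proof -
    have "(\<lambda>m. c * (1/2::real) ^ m) \<longlonglongrightarrow> c * 0" by (intro tendsto_intros) auto
    thus ?thesis by simp
  qed
  have ev1: "\<forall>\<^sub>F n in sequentially. S n z (k - 1) \<noteq> 0"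
    unfolding eventually_sequentially using xpos unfolding x_def by (intro exI[of _ t]) force
  have ev2: "((\<lambda>n. 1 / S n z (k - 1)) \<longlonglongrightarrow> 0)"
  proof (rule Lim_null_comparison)
    show "\<forall>\<^sub>F n in sequentially. norm (1 / S n z (k - 1)) \<le> 2 ^ t * (1/2) ^ n"
      unfolding eventually_sequentially using inv unfolding x_def
      by (intro exI[of _ t]) (auto simp: norm_divide)
  qed (rule lim0)
  have ev3: "((\<lambda>n. S n z j / S n z (k - 1)) \<longlonglongrightarrow> 0)" if j: "j < k" "j \<noteq> k - 1" for j
  proof (rule LIMSEQ_imp_Suc, rule Lim_null_comparison)
    have jj: "j < k - 1" using j by simp
    show "\<forall>\<^sub>F n in sequentially. norm (S (Suc n) z j / S (Suc n) z (k - 1)) \<le> 8 * 2 ^ t * (1/2) ^ n"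
      unfolding eventually_sequentially
    proof (intro exI[of _ t] allI impI)
      fix m assume tm: "t \<le> m"
      have b: "cmod (S (Suc m) z j) \<le> 8 / x m * x (Suc m)"
        using Vp_grow(2)[OF Vm[OF tm] jj, of m] unfolding x_def by simp
      have xs: "0 < x (Suc m)" using xpos[of "Suc m"] tm by simp
      have "norm (S (Suc m) z j / S (Suc m) z (k - 1)) = cmod (S (Suc m) z j) / x (Suc m)"
        unfolding x_def by (simp add: norm_divide)
      also have "\<dots> \<le> 8 / x m" using b xs by (simp add: field_simps)
      also have "\<dots> = 8 * (1 / x m)" by simp
      also have "\<dots> \<le> 8 * (2 ^ t * (1/2) ^ m)" using inv[OF tm] by simp
      finally show "norm (S (Suc m) z j / S (Suc m) z (k - 1)) \<le> 8 * 2 ^ t * (1/2) ^ m" by simp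
    qed
  qed (rule lim0)
  show ?thesis unfolding proj_tendsto_ek_def using ev1 ev2 ev3 by blast
qed


lemma main:
  assumes K: "compact K" "K \<subseteq> Ck k"
  shows "uniform_limit K (\<lambda>n z. Gn k d a \<alpha> n z) (Gfun k d a \<alpha>) sequentially"
proof -
  have "\<exists>b. \<forall>z\<in>K. cmod (z j) \<le> b" for j
  proof -
    have "compact ((\<lambda>z. z j) ` K)"
      using K(1) continuous_on_subset[OF continuous_on_product_coordinates[of j]]
      by (intro compact_continuous_image) auto
    hence "bounded ((\<lambda>z. z j) ` K)" by (rule compact_imp_bounded)
    thus ?thesis unfolding bounded_iff by auto
  qed
  then obtain bf where bf: "\<And>j z. z \<in> K \<Longrightarrow> cmod (z j) \<le> bf j" by metis
  define B where "B = ln (max 1 (\<Sum>j<k. \<bar>bf j\<bar>))"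
  have L0B: "L 0 z \<le> B" if z: "z \<in> K" for z
  proof -
    have "N z \<le> (\<Sum>j<k. \<bar>bf j\<bar>)"
    proof (rule N_le)
      fix j assume "j < k"
      hence "\<bar>bf j\<bar> \<le> (\<Sum>j<k. \<bar>bf j\<bar>)" by (intro member_le_sum) auto
      thus "cmod (z j) \<le> (\<Sum>j<k. \<bar>bf j\<bar>)" using bf[OF z, of j] by linarith
    qed
    hence "D z \<le> max 1 (\<Sum>j<k. \<bar>bf j\<bar>)" unfolding D_def by auto
    thus ?thesis unfolding L_def B_def using D_pos[of z] by simp
  qed
  define eps where "eps n = (B + ln K2) * \<rho> ^ n + 2 * C1 * q ^ n" for n
  have eps0: "eps \<longlonglongrightarrow> 0"
  proof -
    have "eps \<longlonglongrightarrow> (B + ln K2) * 0 + 2 * C1 * 0" unfolding eps_def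
      using rho_props q_props by (intro tendsto_intros) auto
    thus ?thesis by simp
  qed
  have cb: "\<bar>G m z - G n z\<bar> \<le> eps n" if "z \<in> K" "n \<le> m" for z n m
    unfolding eps_def using cauchy_bd[OF L0B[OF that(1)] that(2)] .
  have Gfun_eq: "Gfun k d a \<alpha> z = lim (\<lambda>n. G n z)" if "z \<in> Uplus k d a \<alpha>" for z
    unfolding Gfun_def using that Gn_eq by simp
  have conv: "(\<lambda>n. G n z) \<longlonglongrightarrow> Gfun k d a \<alpha> z" if z: "z \<in> K" for z
  proof (cases "z \<in> Uplus k d a \<alpha>")
    case True
    have "Cauchy (\<lambda>n. G n z)"
    proof (rule metric_CauchyI)
      fix e :: real assume e: "0 < e"
      have "\<forall>\<^sub>F n in sequentially. eps n < e / 2"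
        using eps0 e by (intro order_tendstoD) auto
      then obtain M where M: "\<And>n. M \<le> n \<Longrightarrow> eps n < e / 2"
        unfolding eventually_sequentially by blast
      show "\<exists>M. \<forall>m\<ge>M. \<forall>n\<ge>M. dist (G m z) (G n z) < e"
      proof (intro exI[of _ M] allI impI)
        fix m n assume "M \<le> m" "M \<le> n"
        hence "\<bar>G m z - G M z\<bar> \<le> eps M" "\<bar>G n z - G M z\<bar> \<le> eps M" using cb[OF z] by auto
        thus "dist (G m z) (G n z) < e" using M[of M] unfolding dist_real_def by linarith
      qed
    qed
    hence "convergent (\<lambda>n. G n z)" by (simp add: Cauchy_convergent_iff)
    thus ?thesis using Gfun_eq[OF True] by (simp add: convergent_LIMSEQ_iff)
  next
    case False
    have nv: "S n z \<notin> Vp" for n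
    proof
      assume "S n z \<in> Vp"
      hence "proj_tendsto_ek k (\<lambda>n. S n z)" by (rule proj)
      thus False using False K(2) z unfolding Uplus_def by auto
    qed
    have "(\<lambda>n. G n z) \<longlonglongrightarrow> 0"
    proof (rule Lim_null_comparison)
      show "\<forall>\<^sub>F n in sequentially. norm (G n z) \<le> (L 0 z + ln K2) * \<rho> ^ n"
        using noV_G[OF nv] G_nonneg by (auto simp: mult.commute)
      have "(\<lambda>n. (L 0 z + ln K2) * \<rho> ^ n) \<longlonglongrightarrow> (L 0 z + ln K2) * 0"
        using rho_props by (intro tendsto_intros) auto
      thus "(\<lambda>n. (L 0 z + ln K2) * \<rho> ^ n) \<longlonglongrightarrow> 0" by simp
    qed
    thus ?thesis using False unfolding Gfun_def by simp
  qed
  have unif: "\<bar>G n z - Gfun k d a \<alpha> z\<bar> \<le> eps n" if z: "z \<in> K" for z n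
  proof -
    have "(\<lambda>m. \<bar>G m z - G n z\<bar>) \<longlonglongrightarrow> \<bar>Gfun k d a \<alpha> z - G n z\<bar>"
      using conv[OF z] by (intro tendsto_intros)
    hence "\<bar>Gfun k d a \<alpha> z - G n z\<bar> \<le> eps n"
      by (rule Lim_bounded) (use cb[OF z] in auto)
    thus ?thesis by linarith
  qed
  show ?thesis unfolding uniform_limit_iff
  proof (intro allI impI)
    fix e :: real assume e: "0 < e"
    have "\<forall>\<^sub>F n in sequentially. eps n < e" using eps0 e by (intro order_tendstoD) auto
    thus "\<forall>\<^sub>F n in sequentially. \<forall>z\<in>K. dist (Gn k d a \<alpha> n z) (Gfun k d a \<alpha> z) < e"
    proof eventually_elim
      case (elim n)
      show ?case using unif elim unfolding Gn_eq dist_real_def by (meson le_less_trans)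
    qed
  qed
qed

end

theorem lemma3p9:
  fixes k d dt :: nat
    and a :: "nat \<Rightarrow> complex"
    and \<alpha> :: "nat \<Rightarrow> (nat \<Rightarrow> nat) \<Rightarrow> complex"
    and mt Mt :: real
  assumes k3: "k \<ge> 3"
    and dt1: "dt \<ge> 1"
    and ddt: "dt + 2 \<le> d"
    and mt_pos: "mt > 0" and Mt_pos: "Mt > 0"
    and a_bd: "\<And>n. mt < cmod (a n) \<and> cmod (a n) < Mt"
    and alpha_bd: "\<And>n i. cmod (\<alpha> n i) < Mt"
    and alpha_vars: "\<And>n i. \<alpha> n i \<noteq> 0 \<Longrightarrow> (\<forall>j. j \<notin> {1..<k} \<longrightarrow> i j = 0)"
    and alpha_deg: "\<And>n i. \<alpha> n i \<noteq> 0 \<Longrightarrow> multi_deg i k \<le> dt"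
    and deg_exact: "\<And>n. dt = 1 \<or> (\<exists>i. \<alpha> n i \<noteq> 0 \<and> multi_deg i k = dt)"
  shows "\<forall>K. compact K \<and> K \<subseteq> Ck k \<longrightarrow>
           uniform_limit K (\<lambda>n z. Gn k d a \<alpha> n z) (Gfun k d a \<alpha>) sequentially"
proof -
  interpret wsl k d dt a \<alpha> mt Mt
    using k3 dt1 ddt mt_pos Mt_pos a_bd alpha_bd alpha_vars alpha_deg
    by unfold_locales auto
  show ?thesis using main by blast
qed

end
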